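(* Let $f:(K,\alpha_K)\to(L,\alpha_L)$ be a central extension of a perfect Hom-Leibniz $n$-algebra $(L,\alpha_L)$ with $\alpha_L$ injective, and suppose $(K,\alpha_K)$ satisfies condition (C): $[\alpha_K(k),\alpha_K(k),\alpha_K(k_3),\dots,\alpha_K(k_n)]=0$ for all $k,k_3,\dots,k_n\in K$. Then $f(Z(\alpha_K(K)))=Z(\alpha_L(L))$.
   Context: Fix a field $\mathbb K$ and $n\ge2$. A (multiplicative) Hom-Leibniz $n$-algebra is a $\mathbb K$-vector space $L$ with an $n$-linear bracket and a linear map $\alpha_L$ preserving the bracket, satisfying $[[x_1,\dots,x_n],\alpha_L(y_1),\dots,\alpha_L(y_{n-1})]=\sum_{i=1}^n[\alpha_L(x_1),\dots,[x_i,y_1,\dots,y_{n-1}],\dots,\alpha_L(x_n)]$. Homomorphisms preserve brackets and commute with twisting maps. Perfect: $L=[L,\dots,L]$. For a subspace $S$ closed under the bracket, $Z(S)$ is the set of $x\in S$ such that every bracket with $x$ in some position and all other entries in $S$ is $0$; $Z(\alpha_K(K))$ and $Z(\alpha_L(L))$ are computed inside the subalgebras $\alpha_K(K)$, $\alpha_L(L)$. A central extension of $L$ is a surjective homomorphism $f:K\to L$ with $\ker f\subseteq Z(K)$. *)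

theory Defs
  imports Complex_Main
begin

text \<open>A Hom-Leibniz n-algebra over a field of type 'k is modelled by a carrier type 'v
  (the whole type is the vector space), a scalar multiplication smult, an n-ary
  bracket br taking lists of length n, and a twisting map alpha.\<close>

definition multilinear ::
  "('k::field \<Rightarrow> 'v::ab_group_add \<Rightarrow> 'v) \<Rightarrow> nat \<Rightarrow> ('v list \<Rightarrow> 'v) \<Rightarrow> bool" where
  "multilinear smult n br \<longleftrightarrow>
     (\<forall>xs i. length xs = n \<longrightarrow> i < n \<longrightarrow>
        Vector_Spaces.linear smult smult (\<lambda>y. br (xs[i := y])))"

definition hom_leibniz_nalg ::
  "('k::field \<Rightarrow> 'v::ab_group_add \<Rightarrow> 'v) \<Rightarrow> nat \<Rightarrow> ('v list \<Rightarrow> 'v) \<Rightarrow> ('v \<Rightarrow> 'v) \<Rightarrow> bool" where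
  "hom_leibniz_nalg smult n br alpha \<longleftrightarrow>
     vector_space smult \<and>
     multilinear smult n br \<and>
     Vector_Spaces.linear smult smult alpha \<and>
     (\<forall>xs. length xs = n \<longrightarrow> alpha (br xs) = br (map alpha xs)) \<and>
     (\<forall>xs ys. length xs = n \<longrightarrow> length ys = n - 1 \<longrightarrow>
        br (br xs # map alpha ys) =
        (\<Sum>i<n. br ((map alpha xs)[i := br (xs ! i # ys)])))"

definition hom_leibniz_hom ::
  "('k::field \<Rightarrow> 'v::ab_group_add \<Rightarrow> 'v) \<Rightarrow> ('v list \<Rightarrow> 'v) \<Rightarrow> ('v \<Rightarrow> 'v) \<Rightarrow>
   ('k \<Rightarrow> 'w::ab_group_add \<Rightarrow> 'w) \<Rightarrow> ('w list \<Rightarrow> 'w) \<Rightarrow> ('w \<Rightarrow> 'w) \<Rightarrow> nat \<Rightarrow>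
   ('v \<Rightarrow> 'w) \<Rightarrow> bool" where
  "hom_leibniz_hom smultK brK alphaK smultL brL alphaL n f \<longleftrightarrow>
     Vector_Spaces.linear smultK smultL f \<and>
     (\<forall>xs. length xs = n \<longrightarrow> f (brK xs) = brL (map f xs)) \<and>
     (\<forall>x. f (alphaK x) = alphaL (f x))"

definition perfect ::
  "('k::field \<Rightarrow> 'v::ab_group_add \<Rightarrow> 'v) \<Rightarrow> nat \<Rightarrow> ('v list \<Rightarrow> 'v) \<Rightarrow> bool" where
  "perfect smult n br \<longleftrightarrow> module.span smult {br xs | xs. length xs = n} = UNIV"

definition centre :: "nat \<Rightarrow> ('v::zero list \<Rightarrow> 'v) \<Rightarrow> 'v set \<Rightarrow> 'v set" where
  "centre n br S = {x \<in> S. \<forall>xs i. length xs = n \<longrightarrow> set xs \<subseteq> S \<longrightarrow> i < n \<longrightarrow>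
                         br (xs[i := x]) = 0}"

definition central_extension ::
  "('k::field \<Rightarrow> 'v::ab_group_add \<Rightarrow> 'v) \<Rightarrow> ('v list \<Rightarrow> 'v) \<Rightarrow> ('v \<Rightarrow> 'v) \<Rightarrow>
   ('k \<Rightarrow> 'w::ab_group_add \<Rightarrow> 'w) \<Rightarrow> ('w list \<Rightarrow> 'w) \<Rightarrow> ('w \<Rightarrow> 'w) \<Rightarrow> nat \<Rightarrow>
   ('v \<Rightarrow> 'w) \<Rightarrow> bool" where
  "central_extension smultK brK alphaK smultL brL alphaL n f \<longleftrightarrow>
     hom_leibniz_hom smultK brK alphaK smultL brL alphaL n f \<and>
     surj f \<and> {x. f x = 0} \<subseteq> centre n brK UNIV"

definition condition_C :: "nat \<Rightarrow> ('v::zero list \<Rightarrow> 'v) \<Rightarrow> ('v \<Rightarrow> 'v) \<Rightarrow> bool" where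
  "condition_C n br alpha \<longleftrightarrow>
     (\<forall>k ks. length ks = n - 2 \<longrightarrow> br (alpha k # alpha k # map alpha ks) = 0)"

end

theory Submission
  imports Defs
begin

lemma lin_props:
  assumes "Vector_Spaces.linear s1 s2 g"
  shows "g (x + y) = g x + g y" "g (s1 c x) = s2 c (g x)" "g 0 = 0"
proof -
  show a: "g (x + y) = g x + g y" using assms unfolding Vector_Spaces.linear_iff by blast
  show "g (s1 c x) = s2 c (g x)" using assms unfolding Vector_Spaces.linear_iff by blast
  have "g (0 + 0) = g 0 + g 0" using assms unfolding Vector_Spaces.linear_iff by blast
  then show "g 0 = 0" by simp
qed

lemma ml_props:
  assumes "multilinear s n br" "length xs = n" "i < n"
  shows "br (xs[i := a + b]) = br (xs[i := a]) + br (xs[i := b])"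
    "br (xs[i := s c a]) = s c (br (xs[i := a]))"
    "br (xs[i := 0]) = 0"
proof -
  have l: "Vector_Spaces.linear s s (\<lambda>y. br (xs[i := y]))"
    using assms unfolding multilinear_def by blast
  from lin_props[OF l] show "br (xs[i := a + b]) = br (xs[i := a]) + br (xs[i := b])"
    "br (xs[i := s c a]) = s c (br (xs[i := a]))" "br (xs[i := 0]) = 0" by auto
qed

lemma spanning:
  fixes smultK :: "'k::field \<Rightarrow> 'v::ab_group_add \<Rightarrow> 'v"
    and smultL :: "'k \<Rightarrow> 'w::ab_group_add \<Rightarrow> 'w"
  assumes vsL: "vector_space smultL"
    and lf: "Vector_Spaces.linear smultK smultL f"
    and surj: "surj f"
    and fbr: "\<And>xs. length xs = n \<Longrightarrow> f (brK xs) = brL (map f xs)"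
    and perf: "perfect smultL n brL"
    and P0: "P 0" and Padd: "\<And>x y. P x \<Longrightarrow> P y \<Longrightarrow> P (x + y)"
    and Psc: "\<And>c x. P x \<Longrightarrow> P (smultK c x)"
    and Pker: "\<And>x. f x = 0 \<Longrightarrow> P x"
    and Pbr: "\<And>xs. length xs = n \<Longrightarrow> P (brK xs)"
  shows "P x"
proof -
  have mL: "module smultL" using vsL by (simp add: vector_space_def module_def)
  let ?T = "f ` {x. P x}"
  have sub: "module.subspace smultL ?T"
    unfolding module.subspace_def[OF mL]
  proof (intro conjI ballI allI)
    show "0 \<in> ?T" using P0 lin_props(3)[OF lf] by (metis image_eqI mem_Collect_eq)
  next
    fix a b assume "a \<in> ?T" "b \<in> ?T"
    then obtain x y where "P x" "P y" "a = f x" "b = f y" by auto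
    then show "a + b \<in> ?T" using Padd lin_props(1)[OF lf] by (metis image_eqI mem_Collect_eq)
  next
    fix c a assume "a \<in> ?T"
    then obtain x where "P x" "a = f x" by auto
    then show "smultL c a \<in> ?T" using Psc lin_props(2)[OF lf] by (metis image_eqI mem_Collect_eq)
  qed
  have brs: "{brL xs | xs. length xs = n} \<subseteq> ?T"
  proof
    fix z assume "z \<in> {brL xs | xs. length xs = n}"
    then obtain ys where ys: "z = brL ys" "length ys = n" by auto
    have "map f (map (inv f) ys) = ys" by (simp add: surj surj_f_inv_f map_idI)
    then have "z = f (brK (map (inv f) ys))" using fbr[of "map (inv f) ys"] ys by simp
    then show "z \<in> ?T" using Pbr[of "map (inv f) ys"] ys by auto
  qed
  have "UNIV \<subseteq> ?T" using module.span_minimal[OF mL brs sub] perf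
    unfolding perfect_def by simp
  then obtain s where s: "P s" "f x = f s" by blast
  have "f (x + - s) = 0"
    using lin_props(1)[OF lf, of x "- s"] lin_props(1)[OF lf, of s "- s"] lin_props(3)[OF lf] s
    by (metis add.right_inverse add_left_cancel)
  then have "P (x + - s)" by (rule Pker)
  from Padd[OF this s(1)] show ?thesis by simp
qed


theorem proposition5p4:
  fixes smultK :: "'k::field \<Rightarrow> 'v::ab_group_add \<Rightarrow> 'v"
    and smultL :: "'k \<Rightarrow> 'w::ab_group_add \<Rightarrow> 'w"
    and brK :: "'v list \<Rightarrow> 'v" and brL :: "'w list \<Rightarrow> 'w"
    and alphaK :: "'v \<Rightarrow> 'v" and alphaL :: "'w \<Rightarrow> 'w"
    and f :: "'v \<Rightarrow> 'w" and n :: nat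
  assumes "n \<ge> 2"
    and "hom_leibniz_nalg smultK n brK alphaK"
    and "hom_leibniz_nalg smultL n brL alphaL"
    and "perfect smultL n brL"
    and "inj alphaL"
    and "central_extension smultK brK alphaK smultL brL alphaL n f"
    and "condition_C n brK alphaK"
  shows "f ` centre n brK (range alphaK) = centre n brL (range alphaL)"
proof -
  note n2 = assms(1)
  from assms(2) have vsK: "vector_space smultK" and mK: "multilinear smultK n brK"
    and lK: "Vector_Spaces.linear smultK smultK alphaK"
    and homK: "\<And>xs. length xs = n \<Longrightarrow> alphaK (brK xs) = brK (map alphaK xs)"
    and leibK: "\<And>xs ys. length xs = n \<Longrightarrow> length ys = n - 1 \<Longrightarrow>
        brK (brK xs # map alphaK ys) = (\<Sum>i<n. brK ((map alphaK xs)[i := brK (xs ! i # ys)]))"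
    unfolding hom_leibniz_nalg_def by auto
  from assms(3) have vsL: "vector_space smultL"
    and lL: "Vector_Spaces.linear smultL smultL alphaL"
    and homL: "\<And>xs. length xs = n \<Longrightarrow> alphaL (brL xs) = brL (map alphaL xs)"
    unfolding hom_leibniz_nalg_def by auto
  from assms(6) have lf: "Vector_Spaces.linear smultK smultL f"
    and fbr: "\<And>xs. length xs = n \<Longrightarrow> f (brK xs) = brL (map f xs)"
    and fal: "\<And>x. f (alphaK x) = alphaL (f x)"
    and surj: "surj f"
    and ker: "\<And>x xs i. f x = 0 \<Longrightarrow> length xs = n \<Longrightarrow> i < n \<Longrightarrow> brK (xs[i := x]) = 0"
    unfolding central_extension_def hom_leibniz_hom_def centre_def by auto
  from assms(7) have condC: "\<And>k ks. length ks = n - 2 \<Longrightarrow> brK (alphaK k # alphaK k # map alphaK ks) = 0"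
    unfolding condition_C_def by auto
  have mKm: "module smultK" using vsK by (simp add: vector_space_def module_def)
  note szK = module.scale_zero_right[OF mKm]
  note fl = lin_props[OF lf] and al = lin_props[OF lK] and aLl = lin_props[OF lL]
  note mlK = ml_props[OF mK]

  have alpha_central: "brK ((map alphaK ws)[i := alphaK c]) = 0"
    if "\<And>xs j. length xs = n \<Longrightarrow> j < n \<Longrightarrow> brK (xs[j := c]) = 0" "length ws = n" "i < n" for c ws i
  proof -
    have "(map alphaK ws)[i := alphaK c] = map alphaK (ws[i := c])" by (simp add: map_update)
    then show ?thesis using homK[of "ws[i := c]"] that al(3) by simp
  qed

  have skew: "brK (alphaK a # alphaK b # map alphaK R) = - brK (alphaK b # alphaK a # map alphaK R)"
    if "length R = n - 2" for a b R
  proof -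
    define X where "X u v = brK (u # v # map alphaK R)" for u v
    have len: "length (u # v # map alphaK R) = n" for u v using that n2 by simp
    have X1: "X (u1 + u2) v = X u1 v + X u2 v" for u1 u2 v
      using mlK(1)[OF len[of u1 v], of 0 u1 u2] n2 unfolding X_def by simp
    have X2: "X u (v1 + v2) = X u v1 + X u v2" for u v1 v2
      using mlK(1)[OF len[of u v1], of 1 v1 v2] n2 unfolding X_def by simp
    have "0 = X (alphaK (a + b)) (alphaK (a + b))" unfolding X_def using condC[OF that] by simp
    also have "\<dots> = X (alphaK a) (alphaK a) + X (alphaK a) (alphaK b) + (X (alphaK b) (alphaK a) + X (alphaK b) (alphaK b))"
      by (simp add: al(1) X1 X2 add.assoc)
    also have "\<dots> = X (alphaK a) (alphaK b) + X (alphaK b) (alphaK a)"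
      using condC[OF that] unfolding X_def by simp
    finally show ?thesis unfolding X_def by (simp add: eq_neg_iff_add_eq_0)
  qed

  show ?thesis
  proof
    show "f ` centre n brK (range alphaK) \<subseteq> centre n brL (range alphaL)"
    proof
      fix y assume "y \<in> f ` centre n brK (range alphaK)"
      then obtain x where x: "x \<in> centre n brK (range alphaK)" "y = f x" by auto
      then obtain k where k: "x = alphaK k" unfolding centre_def by auto
      have xc: "brK (zs[i := x]) = 0" if "length zs = n" "set zs \<subseteq> range alphaK" "i < n" for zs i
        using x(1) that unfolding centre_def by auto
      have "y \<in> range alphaL" using x k fal by auto
      moreover have "brL (ls[i := y]) = 0" if lsp: "length ls = n" "set ls \<subseteq> range alphaL" "i < n" for ls i
      proof -
        have "\<forall>l\<in>set ls. \<exists>w. l = (f \<circ> alphaK) w"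
        proof
          fix l assume "l \<in> set ls"
          then obtain m where "l = alphaL m" using lsp(2) by auto
          moreover obtain w where "m = f w" using surj by (metis surjD)
          ultimately show "\<exists>w. l = (f \<circ> alphaK) w" using fal by auto
        qed
        then obtain ws where ws: "ls = map (f \<circ> alphaK) ws" using ex_map_conv by metis
        have "ls[i := y] = map f ((map alphaK ws)[i := x])" using ws x(2) by (simp add: map_update)
        moreover have "brK ((map alphaK ws)[i := x]) = 0" using xc[of "map alphaK ws" i] ws that by auto
        ultimately show ?thesis using fbr[of "(map alphaK ws)[i := x]"] ws that fl(3) by simp
      qed
      ultimately show "y \<in> centre n brL (range alphaL)" unfolding centre_def by blast
    qed
  next
    show "centre n brL (range alphaL) \<subseteq> f ` centre n brK (range alphaK)"
    proof
      fix y assume y: "y \<in> centre n brL (range alphaL)"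
      then obtain l where l: "y = alphaL l" unfolding centre_def by auto
      obtain k where k: "l = f k" using surj by (metis surjD)
      have fak: "f (alphaK k) = y" using fal k l by simp
      have yc: "brL (ls[i := y]) = 0" if "length ls = n" "set ls \<subseteq> range alphaL" "i < n" for ls i
        using y that unfolding centre_def by auto
      have fkc: "brL (ls[j := f k]) = 0" if "length ls = n" "j < n" for ls j
      proof -
        have "alphaL (brL (ls[j := f k])) = brL ((map alphaL ls)[j := y])"
          using homL[of "ls[j := f k]"] that k l by (simp add: map_update)
        also have "\<dots> = 0" using yc[of "map alphaL ls" j] that by auto
        finally show ?thesis using assms(5) aLl(3) by (metis injD)
      qed
      have kc: "brK (xs'[i := brK (xs[j := k])]) = 0"
        if "length xs = n" "j < n" "length xs' = n" "i < n" for xs j xs' i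
      proof (rule ker)
        show "f (brK (xs[j := k])) = 0"
          using fbr[of "xs[j := k]"] that fkc[of "map f xs" j] by (simp add: map_update)
      qed (use that in auto)
      have pos: "brK ((map alphaK ws)[i := alphaK k]) = 0"
        if ws: "length ws = n" and i: "1 \<le> i" "i < n" for ws i
      proof -
        define Lst where "Lst = (map alphaK ws)[i := alphaK k]"
        have lenL: "length Lst = n" unfolding Lst_def using ws by simp
        define P where "P x \<longleftrightarrow> brK (Lst[0 := alphaK x]) = 0" for x
        obtain w0 ws' where ws0: "ws = w0 # ws'" using ws n2 by (cases ws) auto
        obtain i' where i': "i = Suc i'" using i by (cases i) auto
        have Lst_eq: "Lst = alphaK w0 # map alphaK (ws'[i' := k])"
          unfolding Lst_def ws0 i' by (simp add: map_update)
        have "P x" for x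
        proof (rule spanning[OF vsL lf surj fbr assms(4)])
          show "P 0" unfolding P_def using al(3) mlK(3)[OF lenL] n2 by simp
        next
          fix x y assume "P x" "P y" then show "P (x + y)"
            unfolding P_def using al(1) mlK(1)[OF lenL] n2 by simp
        next
          fix c x assume "P x"
          have "brK (Lst[0 := alphaK (smultK c x)]) = smultK c (brK (Lst[0 := alphaK x]))"
            using al(2)[of c x] mlK(2)[OF lenL, of 0 c "alphaK x"] n2 by simp
          then show "P (smultK c x)" using \<open>P x\<close> szK unfolding P_def by simp
        next
          fix x assume fx: "f x = 0"
          have "Lst[0 := alphaK x] = (map alphaK (w0 # ws'[i' := k]))[0 := alphaK x]"
            using Lst_eq by simp
          then show "P x" unfolding P_def
            using alpha_central[of x "w0 # ws'[i' := k]" 0] ker[OF fx] ws0 ws n2 by simp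
        next
          fix xs :: "'v list" assume xs: "length xs = n"
          define ys where "ys = ws'[i' := k]"
          have ys_len: "length ys = n - 1" unfolding ys_def using ws ws0 by simp
          have i'l: "i' < length ws'" using i' i ws ws0 by simp
          have "Lst[0 := alphaK (brK xs)] = brK (map alphaK xs) # map alphaK ys"
            unfolding ys_def using Lst_eq homK[OF xs] by simp
          moreover have "brK (brK (map alphaK xs) # map alphaK ys) =
              (\<Sum>j<n. brK ((map alphaK (map alphaK xs))[j := brK (map alphaK xs ! j # ys)]))"
            using leibK[of "map alphaK xs" ys] xs ys_len by simp
          moreover have "brK ((map alphaK (map alphaK xs))[j := brK (map alphaK xs ! j # ys)]) = 0"
            if "j < n" for j
          proof -
            have "map alphaK xs ! j # ys = (map alphaK xs ! j # ws')[i := k]"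
              unfolding ys_def i' by simp
            then show ?thesis using kc[of "map alphaK xs ! j # ws'" i "map alphaK (map alphaK xs)" j]
              that xs ws ws0 i by simp
          qed
          ultimately show "P (brK xs)" unfolding P_def by simp
        qed
        from this[of w0] show ?thesis
          unfolding P_def using Lst_eq by (simp add: Lst_def)
      qed
      have "alphaK k \<in> centre n brK (range alphaK)"
        unfolding centre_def
      proof (intro CollectI conjI allI impI)
        show "alphaK k \<in> range alphaK" by simp
        fix zs :: "'v list" and i assume zs: "length zs = n" "set zs \<subseteq> range alphaK" "i < n"
        have "\<exists>ws. zs = map alphaK ws" unfolding ex_map_conv using zs(2) by blast
        then obtain ws where ws: "zs = map alphaK ws" by blast
        have lws: "length ws = n" using ws zs(1) by simp
        show "brK (zs[i := alphaK k]) = 0"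
        proof (cases "i = 0")
          case False
          then have "1 \<le> i" by simp
          from pos[OF lws this zs(3)] ws show ?thesis by simp
        next
          case True
          obtain w0 w1 R where R: "ws = w0 # w1 # R"
          proof (cases ws)
            case Nil then show ?thesis using lws n2 by simp
          next
            case (Cons a t) then show ?thesis using lws n2 that by (cases t) auto
          qed
          have lR: "length R = n - 2" using R lws by simp
          have z: "brK (alphaK w1 # alphaK k # map alphaK R) = 0"
            using pos[of "w1 # w0 # R" 1] R lws n2 by simp
          have "brK (zs[i := alphaK k]) = brK (alphaK k # alphaK w1 # map alphaK R)"
            using True ws R by simp
          also have "\<dots> = - brK (alphaK w1 # alphaK k # map alphaK R)" by (rule skew[OF lR])
          also have "- brK (alphaK w1 # alphaK k # map alphaK R) = 0" using z by simp
          finally show ?thesis .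
        qed
      qed
      then show "y \<in> f ` centre n brK (range alphaK)" using fak by blast
    qed
  qed
qed

end
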